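(* Let $(X,d)$ be a compact metric space and let $C(X)$ denote the space of all continuous functions $f:X\to\mathbb{R}$. If $X$ is uncountable, then there exists no reproducing kernel Hilbert space $H$ of functions on $X$ such that $C(X)\subset H$.
   Context: A reproducing kernel Hilbert space (RKHS) on a set $X$ is a Hilbert space $H$ consisting of real-valued functions $f:X\to\mathbb{R}$ (with the pointwise vector space operations) such that for every $x\in X$ the point evaluation $f\mapsto f(x)$ is a continuous linear functional on $H$; equivalently, $H$ has a reproducing kernel $k:X\times X\to\mathbb{R}$ with $k(\cdot,x)\in H$ and $f(x)=\langle f,k(\cdot,x)\rangle_H$ for all $f\in H$, $x\in X$. The inclusion $C(X)\subset H$ is meant as sets of functions on $X$. *)

theory Defs
  imports "HOL-Analysis.Analysis"
begin

definition hilbert_function_space ::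
  "('a \<Rightarrow> real) set \<Rightarrow> (('a \<Rightarrow> real) \<Rightarrow> ('a \<Rightarrow> real) \<Rightarrow> real) \<Rightarrow> bool" where
  "hilbert_function_space H ip \<longleftrightarrow>
     (\<lambda>x. 0) \<in> H \<and>
     (\<forall>f\<in>H. \<forall>g\<in>H. (\<lambda>x. f x + g x) \<in> H) \<and>
     (\<forall>f\<in>H. \<forall>c::real. (\<lambda>x. c * f x) \<in> H) \<and>
     (\<forall>f\<in>H. \<forall>g\<in>H. ip f g = ip g f) \<and>
     (\<forall>f\<in>H. \<forall>g\<in>H. \<forall>h\<in>H. ip (\<lambda>x. f x + g x) h = ip f h + ip g h) \<and>
     (\<forall>f\<in>H. \<forall>g\<in>H. \<forall>c::real. ip (\<lambda>x. c * f x) g = c * ip f g) \<and>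
     (\<forall>f\<in>H. ip f f \<ge> 0) \<and>
     (\<forall>f\<in>H. ip f f = 0 \<longrightarrow> f = (\<lambda>x. 0)) \<and>
     \<comment> \<open>completeness: every Cauchy sequence in H converges in H\<close>
     (\<forall>u::nat \<Rightarrow> ('a \<Rightarrow> real). (\<forall>n. u n \<in> H) \<longrightarrow>
        (\<forall>e>0. \<exists>N. \<forall>m\<ge>N. \<forall>n\<ge>N. sqrt (ip (\<lambda>x. u m x - u n x) (\<lambda>x. u m x - u n x)) < e) \<longrightarrow>
        (\<exists>f\<in>H. (\<lambda>n. sqrt (ip (\<lambda>x. u n x - f x) (\<lambda>x. u n x - f x))) \<longlonglongrightarrow> 0))"

definition rkhs ::
  "('a \<Rightarrow> real) set \<Rightarrow> (('a \<Rightarrow> real) \<Rightarrow> ('a \<Rightarrow> real) \<Rightarrow> real) \<Rightarrow> bool" where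
  "rkhs H ip \<longleftrightarrow> hilbert_function_space H ip \<and>
     (\<forall>x. \<exists>C. \<forall>f\<in>H. \<bar>f x\<bar> \<le> C * sqrt (ip f f))"

end

theory Submission
  imports Defs
begin

locale hfs =
  fixes H :: "('a \<Rightarrow> real) set" and ip :: "('a \<Rightarrow> real) \<Rightarrow> ('a \<Rightarrow> real) \<Rightarrow> real"
  assumes hfs: "hilbert_function_space H ip"
begin

lemma zeroH: "(\<lambda>x. 0) \<in> H" using hfs unfolding hilbert_function_space_def by blast
lemma addH: "f \<in> H \<Longrightarrow> g \<in> H \<Longrightarrow> (\<lambda>x. f x + g x) \<in> H"
  using hfs unfolding hilbert_function_space_def by blast
lemma smulH: "f \<in> H \<Longrightarrow> (\<lambda>x. c * f x) \<in> H"
  using hfs unfolding hilbert_function_space_def by blast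
lemma diffH: "f \<in> H \<Longrightarrow> g \<in> H \<Longrightarrow> (\<lambda>x. f x - g x) \<in> H"
  using addH[of f "\<lambda>x. (-1) * g x"] smulH[of g "-1"] by simp
lemma ip_sym: "f \<in> H \<Longrightarrow> g \<in> H \<Longrightarrow> ip f g = ip g f"
  using hfs unfolding hilbert_function_space_def by blast
lemma ip_addL: "f \<in> H \<Longrightarrow> g \<in> H \<Longrightarrow> h \<in> H \<Longrightarrow> ip (\<lambda>x. f x + g x) h = ip f h + ip g h"
  using hfs unfolding hilbert_function_space_def by blast
lemma ip_smulL: "f \<in> H \<Longrightarrow> g \<in> H \<Longrightarrow> ip (\<lambda>x. c * f x) g = c * ip f g"
  using hfs unfolding hilbert_function_space_def by blast
lemma ip_pos: "f \<in> H \<Longrightarrow> ip f f \<ge> 0"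
  using hfs unfolding hilbert_function_space_def by blast
lemma ip_def0: "f \<in> H \<Longrightarrow> ip f f = 0 \<Longrightarrow> f = (\<lambda>x. 0)"
  using hfs unfolding hilbert_function_space_def by blast
lemma completeH: "(\<And>n. u n \<in> H) \<Longrightarrow>
        (\<forall>e>0. \<exists>N. \<forall>m\<ge>N. \<forall>n\<ge>N. sqrt (ip (\<lambda>x. u m x - u n x) (\<lambda>x. u m x - u n x)) < e) \<Longrightarrow>
        (\<exists>f\<in>H. (\<lambda>n. sqrt (ip (\<lambda>x. u n x - f x) (\<lambda>x. u n x - f x))) \<longlonglongrightarrow> 0)"
  using hfs unfolding hilbert_function_space_def by blast

lemma ip_addR: "f \<in> H \<Longrightarrow> g \<in> H \<Longrightarrow> h \<in> H \<Longrightarrow> ip h (\<lambda>x. f x + g x) = ip h f + ip h g"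
  using ip_sym[of h "\<lambda>x. f x + g x"] addH[of f g] ip_addL[of f g h] ip_sym[of h f] ip_sym[of h g] by simp
lemma ip_smulR: "f \<in> H \<Longrightarrow> g \<in> H \<Longrightarrow> ip g (\<lambda>x. c * f x) = c * ip g f"
  using ip_sym[of g "\<lambda>x. c * f x"] smulH[of f c] ip_smulL[of f g c] ip_sym[of g f] by simp
lemma ip_diffL: "f \<in> H \<Longrightarrow> g \<in> H \<Longrightarrow> h \<in> H \<Longrightarrow> ip (\<lambda>x. f x - g x) h = ip f h - ip g h"
  using ip_addL[of f "\<lambda>x. (-1) * g x" h] smulH[of g "-1"] ip_smulL[of g h "-1"] by simp
lemma ip_diffR: "f \<in> H \<Longrightarrow> g \<in> H \<Longrightarrow> h \<in> H \<Longrightarrow> ip h (\<lambda>x. f x - g x) = ip h f - ip h g"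
  using ip_sym[of h "\<lambda>x. f x - g x"] diffH[of f g] ip_diffL[of f g h] ip_sym[of h f] ip_sym[of h g] by simp

definition nr where "nr f = sqrt (ip f f)"

lemma nr_ge0: "f \<in> H \<Longrightarrow> nr f \<ge> 0" unfolding nr_def by (rule real_sqrt_ge_zero[OF ip_pos])
lemma nr_sq: "f \<in> H \<Longrightarrow> (nr f)^2 = ip f f" by (simp add: nr_def ip_pos)

lemma expand_add: "f \<in> H \<Longrightarrow> g \<in> H \<Longrightarrow>
   ip (\<lambda>x. f x + g x) (\<lambda>x. f x + g x) = ip f f + 2 * ip f g + ip g g"
  by (simp add: ip_addL ip_addR addH ip_sym[of g f])
lemma expand_diff: "f \<in> H \<Longrightarrow> g \<in> H \<Longrightarrow>
   ip (\<lambda>x. f x - g x) (\<lambda>x. f x - g x) = ip f f - 2 * ip f g + ip g g"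
  by (simp add: ip_diffL ip_diffR diffH ip_sym[of g f])

lemma CS: assumes f: "f \<in> H" and g: "g \<in> H" shows "(ip f g)^2 \<le> ip f f * ip g g"
proof (cases "ip g g = 0")
  case True
  then have "g = (\<lambda>x. 0)" using ip_def0 g by blast
  then have "ip f g = 0" using ip_smulR[of g f 0] f g by simp
  then show ?thesis using True by simp
next
  case False
  then have gp: "ip g g > 0" using ip_pos[OF g] by linarith
  define t where "t = ip f g / ip g g"
  have "0 \<le> ip (\<lambda>x. f x - (\<lambda>x. t * g x) x) (\<lambda>x. f x - (\<lambda>x. t * g x) x)"
    using ip_pos diffH smulH f g by blast
  also have "\<dots> = ip f f - 2 * t * ip f g + t * t * ip g g"
    using expand_diff[OF f smulH[OF g]] ip_smulR[OF g f] ip_smulR[OF g smulH[OF g]] ip_smulL[OF g g] g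
    by simp
  finally have h0: "0 \<le> ip f f - 2 * t * ip f g + t * t * ip g g" .
  have tg: "t * ip g g = ip f g" using gp by (simp add: t_def)
  have "t * t * ip g g = t * ip f g" using tg by (metis mult.assoc)
  with h0 have h1: "t * ip f g \<le> ip f f" by linarith
  have "t * ip f g = (ip f g)^2 / ip g g" by (simp add: t_def power2_eq_square)
  with h1 have "(ip f g)^2 / ip g g \<le> ip f f" by simp
  then show ?thesis using gp by (simp add: pos_divide_le_eq mult.commute)
qed

lemma ip_le_nr: assumes f: "f \<in> H" and g: "g \<in> H" shows "ip f g \<le> nr f * nr g"
proof -
  have sq: "(ip f g)^2 \<le> (nr f * nr g)^2"
    using CS[OF f g] by (simp add: power_mult_distrib nr_sq f g)
  have nn: "nr f * nr g \<ge> 0" using nr_ge0 f g by simp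
  show ?thesis
  proof (cases "ip f g \<le> 0")
    case False
    then show ?thesis using power2_le_imp_le[of "ip f g" "nr f * nr g"] sq nn by simp
  qed (use nn in linarith)
qed

lemma nr_add: assumes f: "f \<in> H" and g: "g \<in> H" shows "nr (\<lambda>x. f x + g x) \<le> nr f + nr g"
proof -
  have "(nr (\<lambda>x. f x + g x))^2 \<le> (nr f + nr g)^2"
    using ip_le_nr[OF f g] by (simp add: nr_sq addH f g expand_add power2_sum)
  then show ?thesis using nr_ge0 f g by (meson add_nonneg_nonneg power2_le_imp_le)
qed

lemma nr_smul: assumes f: "f \<in> H" shows "nr (\<lambda>x. c * f x) = \<bar>c\<bar> * nr f"
proof -
  have "ip (\<lambda>x. c * f x) (\<lambda>x. c * f x) = c^2 * ip f f"
    using ip_smulL[OF f smulH[OF f]] ip_smulR[OF f f] by (simp add: power2_eq_square)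
  then show ?thesis by (simp add: nr_def real_sqrt_mult)
qed

lemma nr_diff: assumes f: "f \<in> H" and g: "g \<in> H" shows "nr (\<lambda>x. f x - g x) \<le> nr f + nr g"
  using nr_add[OF f smulH[OF g, of "-1"]] nr_smul[OF g, of "-1"] by simp

lemma nr_diff_sym: assumes f: "f \<in> H" and g: "g \<in> H" shows "nr (\<lambda>x. f x - g x) = nr (\<lambda>x. g x - f x)"
  using nr_smul[OF diffH[OF g f], of "-1"] by simp

lemma nr_diff_tri: assumes f: "f \<in> H" and g: "g \<in> H" and h: "h \<in> H"
  shows "nr (\<lambda>x. f x - h x) \<le> nr (\<lambda>x. f x - g x) + nr (\<lambda>x. g x - h x)"
  using nr_add[OF diffH[OF f g] diffH[OF g h]] by simp

lemma parallelogram: assumes f: "f \<in> H" and g: "g \<in> H"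
  shows "(nr (\<lambda>x. f x + g x))^2 + (nr (\<lambda>x. f x - g x))^2 = 2 * (nr f)^2 + 2 * (nr g)^2"
  by (simp add: nr_sq f g addH diffH expand_add expand_diff)

lemma sumH: "finite A \<Longrightarrow> (\<And>i. i \<in> A \<Longrightarrow> u i \<in> H) \<Longrightarrow> (\<lambda>x. \<Sum>i\<in>A. u i x) \<in> H"
proof (induction A rule: finite_induct)
  case empty then show ?case by (simp add: zeroH)
next
  case (insert a A) then show ?case using addH[of "u a" "\<lambda>x. \<Sum>i\<in>A. u i x"] by simp
qed

lemma nr_sum: "finite A \<Longrightarrow> (\<And>i. i \<in> A \<Longrightarrow> u i \<in> H) \<Longrightarrow> nr (\<lambda>x. \<Sum>i\<in>A. u i x) \<le> (\<Sum>i\<in>A. nr (u i))"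
proof (induction A rule: finite_induct)
  case empty then show ?case using nr_smul[OF zeroH, of 0] by simp
next
  case (insert a A)
  have "nr (\<lambda>x. \<Sum>i\<in>insert a A. u i x) = nr (\<lambda>x. u a x + (\<lambda>x. \<Sum>i\<in>A. u i x) x)"
    using insert by simp
  also have "\<dots> \<le> nr (u a) + nr (\<lambda>x. \<Sum>i\<in>A. u i x)"
    using nr_add[of "u a" "\<lambda>x. \<Sum>i\<in>A. u i x"] insert sumH[of A u] by simp
  finally show ?case using insert by simp
qed

end

lemma geom_sum_half: "n \<le> m \<Longrightarrow> (\<Sum>j\<in>{n..<m}. ((1::real)/2)^j) = 2 * (1/2)^n - 2 * (1/2)^m"
proof (induction m rule: dec_induct)
  case base then show ?case by simp
next
  case (step m) then show ?case by simp
qed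

locale rk = hfs H ip for H :: "('a::metric_space \<Rightarrow> real) set" and ip +
  assumes evalb: "\<And>x. \<exists>C. \<forall>f\<in>H. \<bar>f x\<bar> \<le> C * nr f"
    and contH: "\<And>f. continuous_on UNIV f \<Longrightarrow> f \<in> H"
begin

lemma conv_pw:
  assumes u: "\<And>n. u n \<in> H" and g: "g \<in> H" and lim: "(\<lambda>n. nr (\<lambda>x. u n x - g x)) \<longlonglongrightarrow> 0"
  shows "(\<lambda>n. u n x) \<longlonglongrightarrow> g x"
proof -
  obtain C where C: "\<forall>f\<in>H. \<bar>f x\<bar> \<le> C * nr f" using evalb by blast
  have b: "\<bar>u n x - g x\<bar> \<le> C * nr (\<lambda>x. u n x - g x)" for n
    using bspec[OF C diffH[OF u g]] by simp
  have "(\<lambda>n. C * nr (\<lambda>x. u n x - g x)) \<longlonglongrightarrow> C * 0"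
    by (rule tendsto_mult_left[OF lim])
  then have lim2: "(\<lambda>n. C * nr (\<lambda>x. u n x - g x)) \<longlonglongrightarrow> 0" by simp
  have ev: "eventually (\<lambda>n. norm (u n x - g x) \<le> C * nr (\<lambda>x. u n x - g x)) sequentially"
    using b by simp
  have "(\<lambda>n. u n x - g x) \<longlonglongrightarrow> 0" by (rule Lim_null_comparison[OF ev lim2])
  then show ?thesis by (simp add: LIM_zero_iff)
qed

lemma baire_ball:
  "\<exists>m::nat. \<exists>F0 r. r > 0 \<and> ball F0 r \<subseteq> closure {F :: 'a \<Rightarrow>\<^sub>C real. nr (apply_bcontfun F) \<le> real m}"
proof (rule ccontr)
  define E where "E m = closure {F :: 'a \<Rightarrow>\<^sub>C real. nr (apply_bcontfun F) \<le> real m}" for m :: nat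
  assume "\<not> ?thesis"
  then have no: "\<And>m F0 r. r > 0 \<Longrightarrow> \<not> ball F0 r \<subseteq> E m" unfolding E_def by blast
  have int: "interior (E m) = {}" for m
  proof (rule ccontr)
    assume "interior (E m) \<noteq> {}"
    then obtain F0 where "F0 \<in> interior (E m)" by blast
    then obtain r where "r > 0" "ball F0 r \<subseteq> interior (E m)"
      using open_contains_ball open_interior by blast
    then have "ball F0 r \<subseteq> E m" using interior_subset by blast
    then show False using no[OF \<open>r > 0\<close>] by blast
  qed
  have "euclidean interior_of \<Union>(range E) = {}"
  proof (rule Baire_category_alt)
    show "completely_metrizable_space (euclidean :: ('a \<Rightarrow>\<^sub>C real) topology) \<or>
       locally_compact_space (euclidean :: ('a \<Rightarrow>\<^sub>C real) topology) \<and> regular_space (euclidean :: ('a \<Rightarrow>\<^sub>C real) topology)"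
      using completely_metrizable_space_euclidean by blast
    show "countable (range E)" by simp
    fix T assume "T \<in> range E"
    then obtain m where Tm: "T = E m" by blast
    have "closed (E m)" unfolding E_def by (rule closed_closure)
    then show "closedin euclidean T \<and> euclidean interior_of T = {}"
      using int[of m] Tm by simp
  qed
  moreover have UN: "\<Union>(range E) = UNIV"
  proof -
    have "F \<in> E (nat \<lceil>nr (apply_bcontfun F)\<rceil>)" for F
    proof -
      have "nr (apply_bcontfun F) \<le> real (nat \<lceil>nr (apply_bcontfun F)\<rceil>)"
        by (rule real_nat_ceiling_ge)
      then show ?thesis unfolding E_def by (intro subsetD[OF closure_subset]) simp
    qed
    then show ?thesis by blast
  qed
  ultimately have "interior (UNIV :: ('a \<Rightarrow>\<^sub>C real) set) = {}"
    by (simp only: euclidean_interior_of)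
  then show False by (simp only: interior_UNIV UNIV_not_empty)
qed


lemma approxA:
  assumes ball: "ball F0 r \<subseteq> closure {F :: 'a \<Rightarrow>\<^sub>C real. nr (apply_bcontfun F) \<le> real m}"
    and F: "norm F < r" and d: "\<delta> > 0"
  shows "\<exists>g. continuous_on UNIV g \<and> nr g \<le> 2 * real m \<and> (\<forall>x. \<bar>apply_bcontfun F x - g x\<bar> < \<delta>)"
proof -
  let ?S = "{F :: 'a \<Rightarrow>\<^sub>C real. nr (apply_bcontfun F) \<le> real m}"
  have r: "r > 0" using F norm_ge_zero[of F] by linarith
  have "dist F0 (F0 + F) < r" using F by (simp add: dist_norm)
  then have "F0 + F \<in> closure ?S" using ball by auto
  have h2: "\<delta>/2 > 0" using d by simp
  from \<open>F0 + F \<in> closure ?S\<close>[unfolded closure_approachable] h2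
  obtain a where a: "a \<in> ?S" "dist a (F0 + F) < \<delta>/2" by blast
  have "F0 \<in> closure ?S" using ball r by auto
  from this[unfolded closure_approachable] h2
  obtain b where b: "b \<in> ?S" "dist b F0 < \<delta>/2" by blast
  have e1: "\<bar>apply_bcontfun a x - (apply_bcontfun F0 x + apply_bcontfun F x)\<bar> < \<delta>/2" for x
    using dist_bounded[of a x "F0 + F"] a(2) by (simp add: dist_real_def)
  have e2: "\<bar>apply_bcontfun b x - apply_bcontfun F0 x\<bar> < \<delta>/2" for x
    using dist_bounded[of b x F0] b(2) by (simp add: dist_real_def)
  have aH: "apply_bcontfun a \<in> H" and bH: "apply_bcontfun b \<in> H" by (auto intro: contH)
  show ?thesis
  proof (intro exI conjI allI)
    show "continuous_on UNIV (\<lambda>x. apply_bcontfun a x - apply_bcontfun b x)"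
      by (intro continuous_intros) auto
    show "nr (\<lambda>x. apply_bcontfun a x - apply_bcontfun b x) \<le> 2 * real m"
      using nr_diff[OF aH bH] a(1) b(1) by simp
    fix x
    show "\<bar>apply_bcontfun F x - (apply_bcontfun a x - apply_bcontfun b x)\<bar> < \<delta>"
      using e1[of x] e2[of x] unfolding abs_less_iff by linarith
  qed
qed

lemma approxB:
  assumes ball: "ball F0 r \<subseteq> closure {F :: 'a \<Rightarrow>\<^sub>C real. nr (apply_bcontfun F) \<le> real m}"
    and r: "r > 0"
    and f: "continuous_on UNIV f" and fb: "\<And>x. \<bar>f x\<bar> \<le> \<rho>" and rho: "\<rho> > 0" and d: "\<delta> > 0"
  shows "\<exists>g. continuous_on UNIV g \<and> nr g \<le> (4 * real m / r) * \<rho> \<and> (\<forall>x. \<bar>f x - g x\<bar> \<le> \<delta>)"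
proof -
  define c where "c = r / (2 * \<rho>)"
  have c: "c > 0" using r rho by (simp add: c_def)
  have inb: "(\<lambda>x. c * f x) \<in> bcontfun"
  proof (rule bcontfun_normI[where b = "c * \<rho>"])
    show "continuous_on UNIV (\<lambda>x. c * f x)" using f by (intro continuous_intros)
    fix x show "norm (c * f x) \<le> c * \<rho>" using fb[of x] c by (simp add: abs_mult)
  qed
  define F where "F = Bcontfun (\<lambda>x. c * f x)"
  have Fx: "apply_bcontfun F = (\<lambda>x. c * f x)" using Bcontfun_inverse[OF inb] by (simp add: F_def)
  have "norm F \<le> c * \<rho>"
    by (rule norm_bound) (use fb c in \<open>simp add: Fx abs_mult\<close>)
  also have "c * \<rho> = r / 2" using rho by (simp add: c_def)
  finally have "norm F < r" using r by simp
  then obtain g' where g': "continuous_on UNIV g'" "nr g' \<le> 2 * real m"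
      "\<And>x. \<bar>apply_bcontfun F x - g' x\<bar> < c * \<delta>"
    using approxA[OF ball _ mult_pos_pos[OF c d]] by blast
  have g'H: "g' \<in> H" using contH g'(1) .
  show ?thesis
  proof (intro exI conjI allI)
    show "continuous_on UNIV (\<lambda>x. (1/c) * g' x)" using g'(1) by (intro continuous_intros)
    have "nr (\<lambda>x. (1/c) * g' x) = \<bar>1/c\<bar> * nr g'" by (rule nr_smul[OF g'H])
    also have "\<dots> = (1/c) * nr g'" using c by simp
    also have "\<dots> \<le> (1/c) * (2 * real m)" using g'(2) c by (intro mult_left_mono) auto
    also have "(1/c) * (2 * real m) = (4 * real m / r) * \<rho>"
    proof -
      have "1/c = 2 * \<rho> / r" by (simp add: c_def)
      then show ?thesis by simp
    qed
    finally show "nr (\<lambda>x. (1/c) * g' x) \<le> (4 * real m / r) * \<rho>" .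
    fix x
    have "\<bar>c * f x - g' x\<bar> < c * \<delta>" using g'(3)[of x] by (simp add: Fx)
    moreover have "c * (f x - (1/c) * g' x) = c * f x - g' x" using c by (simp add: right_diff_distrib)
    ultimately have "\<bar>c * (f x - (1/c) * g' x)\<bar> < c * \<delta>" by simp
    then have "c * \<bar>f x - (1/c) * g' x\<bar> < c * \<delta>" using c by (simp add: abs_mult)
    then show "\<bar>f x - (1/c) * g' x\<bar> \<le> \<delta>" using c by simp
  qed
qed

end

context rk begin

lemma bounded_incl: "\<exists>M. \<forall>f. continuous_on UNIV f \<longrightarrow> (\<forall>x. \<bar>f x\<bar> \<le> 1) \<longrightarrow> nr f \<le> M"
proof -
  obtain m F0 r where r: "r > 0"
    and ball: "ball F0 r \<subseteq> closure {F :: 'a \<Rightarrow>\<^sub>C real. nr (apply_bcontfun F) \<le> real m}"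
    using baire_ball by blast
  define K where "K = 4 * real m / r"
  have K0: "K \<ge> 0" using r by (simp add: K_def)
  have B: "\<exists>g. continuous_on UNIV g \<and> nr g \<le> K * \<rho> \<and> (\<forall>x. \<bar>h x - g x\<bar> \<le> \<delta>)"
    if "continuous_on UNIV h" "\<And>x. \<bar>h x\<bar> \<le> \<rho>" "\<rho> > 0" "\<delta> > 0" for h \<rho> \<delta>
    using approxB[OF ball r that] by (simp add: K_def)
  define P where "P h j g \<longleftrightarrow> continuous_on UNIV g \<and> nr g \<le> K * (1/2)^j \<and> (\<forall>x. \<bar>h x - g x\<bar> \<le> (1/2)^(Suc j))"
    for h :: "'a \<Rightarrow> real" and j g
  define step where "step h j = (SOME g. P h j g)" for h j
  have stepP: "P h j (step h j)" if "continuous_on UNIV h" "\<And>x. \<bar>h x\<bar> \<le> (1/2)^j" for h j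
  proof -
    have "\<exists>g. P h j g" using B[OF that, of "(1/2)^Suc j"] unfolding P_def by simp
    then show ?thesis unfolding step_def by (rule someI_ex)
  qed
  show ?thesis
  proof (intro exI allI impI)
    fix f :: "'a \<Rightarrow> real"
    assume f: "continuous_on UNIV f" and f1: "\<forall>x. \<bar>f x\<bar> \<le> 1"
    define rem where "rem = rec_nat f (\<lambda>j h. (\<lambda>x. h x - step h j x))"
    have rem0: "rem 0 = f" by (simp add: rem_def)
    have remS: "rem (Suc j) = (\<lambda>x. rem j x - step (rem j) j x)" for j by (simp add: rem_def)
    have inv: "continuous_on UNIV (rem j) \<and> (\<forall>x. \<bar>rem j x\<bar> \<le> (1/2)^j)" for j
    proof (induction j)
      case 0 then show ?case using f f1 rem0 by simp
    next
      case (Suc j)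
      then have p: "P (rem j) j (step (rem j) j)" using stepP by blast
      show ?case unfolding remS
      proof
        show "continuous_on UNIV (\<lambda>x. rem j x - step (rem j) j x)"
          using Suc p unfolding P_def by (intro continuous_intros) auto
        show "\<forall>x. \<bar>rem j x - step (rem j) j x\<bar> \<le> (1 / 2) ^ Suc j"
          using p unfolding P_def by blast
      qed
    qed
    define g where "g j = step (rem j) j" for j
    have gP: "P (rem j) j (g j)" for j unfolding g_def using stepP inv by blast
    have gH: "g j \<in> H" for j using gP[of j] contH unfolding P_def by blast
    have gn: "nr (g j) \<le> K * (1/2)^j" for j using gP[of j] unfolding P_def by blast
    define S where "S n = (\<lambda>x. \<Sum>j<n. g j x)" for n
    have SH: "S n \<in> H" for n unfolding S_def by (rule sumH) (auto intro: gH)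
    have Sf: "S n x = f x - rem n x" for n x
    proof (induction n)
      case 0 then show ?case by (simp add: S_def rem0)
    next
      case (Suc n) then show ?case by (simp add: S_def remS g_def)
    qed
    have Sdiff: "nr (\<lambda>x. S k x - S n x) \<le> 2 * K * (1/2)^n" if "n \<le> k" for n k
    proof -
      have eq: "(\<lambda>x. S k x - S n x) = (\<lambda>x. \<Sum>j\<in>{n..<k}. g j x)"
      proof
        fix x
        have "(\<Sum>j<k. g j x) = (\<Sum>j<n. g j x) + (\<Sum>j\<in>{n..<k}. g j x)"
          using sum.atLeastLessThan_concat[of 0 n k "\<lambda>j. g j x"] that by (simp add: lessThan_atLeast0)
        then show "S k x - S n x = (\<Sum>j\<in>{n..<k}. g j x)" by (simp add: S_def)
      qed
      have "nr (\<lambda>x. \<Sum>j\<in>{n..<k}. g j x) \<le> (\<Sum>j\<in>{n..<k}. nr (g j))"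
        by (rule nr_sum) (auto intro: gH)
      also have "\<dots> \<le> (\<Sum>j\<in>{n..<k}. K * (1/2)^j)" by (rule sum_mono) (rule gn)
      also have "\<dots> = K * (2 * (1/2)^n - 2 * (1/2)^k)"
        by (simp add: sum_distrib_left[symmetric] geom_sum_half[OF that])
      also have "\<dots> \<le> 2 * K * (1/2)^n"
      proof -
        have "K * (1/2)^k \<ge> 0" using K0 by simp
        then show ?thesis by (simp add: right_diff_distrib)
      qed
      finally show ?thesis using eq by simp
    qed
    have Sn: "nr (S n) \<le> 2 * K" for n
    proof -
      have "nr (S n) \<le> (\<Sum>j<n. nr (g j))" unfolding S_def by (rule nr_sum) (auto intro: gH)
      also have "\<dots> \<le> (\<Sum>j<n. K * (1/2)^j)" by (rule sum_mono) (rule gn)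
      also have "\<dots> = K * (2 * (1/2)^0 - 2 * (1/2)^n)"
        using geom_sum_half[of 0 n] by (simp add: sum_distrib_left[symmetric] lessThan_atLeast0)
      also have "\<dots> \<le> 2 * K"
      proof -
        have "K * (1/2)^n \<ge> 0" using K0 by simp
        then show ?thesis by (simp add: right_diff_distrib)
      qed
      finally show ?thesis .
    qed
    have half0: "(\<lambda>n. ((1::real)/2)^n) \<longlonglongrightarrow> 0" by (rule LIMSEQ_realpow_zero) auto
    have cauchy: "\<forall>e>0. \<exists>N. \<forall>k\<ge>N. \<forall>n\<ge>N. sqrt (ip (\<lambda>x. S k x - S n x) (\<lambda>x. S k x - S n x)) < e"
    proof (intro allI impI)
      fix e :: real assume e: "e > 0"
      have "e / (2 * K + 1) > 0" using e K0 by simp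
      from order_tendstoD(2)[OF half0 this] obtain N where N: "\<And>n. n \<ge> N \<Longrightarrow> (1/2)^n < e / (2 * K + 1)"
        unfolding eventually_sequentially by blast
      have Nb: "2 * K * (1/2)^n < e" if "n \<ge> N" for n
      proof -
        have "2 * K * (1/2)^n \<le> (2 * K + 1) * (1/2)^n" by simp
        also have "\<dots> < (2 * K + 1) * (e / (2 * K + 1))" using N[OF that] K0 by (intro mult_strict_left_mono) auto
        also have "\<dots> = e" using K0 by simp
        finally show ?thesis .
      qed
      show "\<exists>N. \<forall>k\<ge>N. \<forall>n\<ge>N. sqrt (ip (\<lambda>x. S k x - S n x) (\<lambda>x. S k x - S n x)) < e"
      proof (intro exI allI impI)
        fix k n assume k: "k \<ge> N" and n: "n \<ge> N"
        have "nr (\<lambda>x. S k x - S n x) < e"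
        proof (cases "n \<le> k")
          case True then show ?thesis using Sdiff[OF True] Nb[OF n] by linarith
        next
          case False
          then have "nr (\<lambda>x. S n x - S k x) < e" using Sdiff[of k n] Nb[OF k] by linarith
          then show ?thesis using nr_diff_sym[OF SH SH, of k n] by simp
        qed
        then show "sqrt (ip (\<lambda>x. S k x - S n x) (\<lambda>x. S k x - S n x)) < e" by (simp add: nr_def)
      qed
    qed
    obtain G where GH: "G \<in> H" and GL: "(\<lambda>n. sqrt (ip (\<lambda>x. S n x - G x) (\<lambda>x. S n x - G x))) \<longlonglongrightarrow> 0"
      using completeH[OF SH cauchy] by blast
    have GL': "(\<lambda>n. nr (\<lambda>x. S n x - G x)) \<longlonglongrightarrow> 0" using GL by (simp add: nr_def)
    have Gf: "G = f"
    proof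
      fix x
      have l1: "(\<lambda>n. S n x) \<longlonglongrightarrow> G x" by (rule conv_pw[OF SH GH GL'])
      have "(\<lambda>n. rem n x) \<longlonglongrightarrow> 0"
      proof (rule Lim_null_comparison[OF _ half0])
        show "\<forall>\<^sub>F n in sequentially. norm (rem n x) \<le> (1/2)^n" using inv by simp
      qed
      then have "(\<lambda>n. f x - rem n x) \<longlonglongrightarrow> f x - 0" by (intro tendsto_diff tendsto_const)
      then have l2: "(\<lambda>n. S n x) \<longlonglongrightarrow> f x" by (simp add: Sf)
      show "G x = f x" using LIMSEQ_unique[OF l1 l2] .
    qed
    have fH: "f \<in> H" using contH f .
    have bnd: "nr f - 2 * K \<le> nr (\<lambda>x. S n x - G x)" for n
    proof -
      have "f = (\<lambda>x. S n x + (\<lambda>x. f x - S n x) x)" by simp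
      then have "nr f \<le> nr (S n) + nr (\<lambda>x. f x - S n x)"
        using nr_add[OF SH diffH[OF fH SH]] by metis
      also have "nr (\<lambda>x. f x - S n x) = nr (\<lambda>x. S n x - G x)"
        using nr_diff_sym[OF fH SH] Gf by simp
      finally show ?thesis using Sn[of n] by linarith
    qed
    have "nr f - 2 * K \<le> 0"
      by (rule LIMSEQ_le_const[OF GL']) (use bnd in blast)
    then show "nr f \<le> 2 * K" by simp
  qed
qed

end

context rk begin

lemma key:
  fixes Fs :: "'a set" and c M :: real
  assumes M: "\<forall>f. continuous_on UNIV f \<longrightarrow> (\<forall>x. \<bar>f x\<bar> \<le> 1) \<longrightarrow> nr f \<le> M"
    and Fs: "finite Fs" and Cb: "\<forall>x\<in>Fs. \<forall>f\<in>H. \<bar>f x\<bar> \<le> c * nr f"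
  shows "real (card Fs) \<le> (c * M)^2"
proof -
  define D where "D = (\<lambda>(x, y). dist x y) ` {(x, y). x \<in> Fs \<and> y \<in> Fs \<and> x \<noteq> y}"
  have finD: "finite D" unfolding D_def
    by (rule finite_imageI, rule finite_subset[of _ "Fs \<times> Fs"]) (auto simp: Fs)
  define \<delta> where "\<delta> = Min (insert 1 D)"
  have dpos: "\<delta> > 0" unfolding \<delta>_def using finD by (auto simp: D_def)
  have dle: "\<delta> \<le> dist x y" if "x \<in> Fs" "y \<in> Fs" "x \<noteq> y" for x y
  proof -
    have "dist x y \<in> insert 1 D" unfolding D_def using that by auto
    then show ?thesis unfolding \<delta>_def using finD by simp
  qed
  define b where "b x = (\<lambda>y. max 0 (1 - 2 * dist x y / \<delta>))" for x :: 'a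
  have bcont: "continuous_on UNIV (b x)" for x unfolding b_def by (intro continuous_intros) (use dpos in auto)
  have bH: "b x \<in> H" for x using contH bcont .
  have b01: "0 \<le> b x y" "b x y \<le> 1" for x y
  proof -
    show "0 \<le> b x y" by (simp add: b_def)
    have "2 * dist x y / \<delta> \<ge> 0" using dpos by simp
    then show "b x y \<le> 1" by (simp add: b_def)
  qed
  have bxx: "b x x = 1" for x by (simp add: b_def)
  have bnear: "dist x y < \<delta> / 2" if "b x y \<noteq> 0" for x y
  proof -
    have "1 - 2 * dist x y / \<delta> > 0"
    proof (rule ccontr)
      assume "\<not> 1 - 2 * dist x y / \<delta> > 0"
      then have "b x y = 0" by (simp add: b_def)
      with that show False by simp
    qed
    then have "2 * dist x y / \<delta> < 1" by simp
    then show ?thesis using dpos by (simp add: field_simps)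
  qed
  have bdisj: "b x' y = 0" if "x \<in> Fs" "x' \<in> Fs" "x \<noteq> x'" "b x y \<noteq> 0" for x x' y
  proof (rule ccontr)
    assume "b x' y \<noteq> 0"
    then have "dist x' y < \<delta>/2" by (rule bnear)
    moreover have "dist x y < \<delta>/2" using that(4) by (rule bnear)
    moreover have "dist x x' \<le> dist x y + dist x' y" using dist_triangle[of x x' y] dist_commute[of y x'] by simp
    moreover have "\<delta> \<le> dist x x'" using dle that by blast
    ultimately show False by linarith
  qed
  have bnr: "1 \<le> c * nr (b x)" if "x \<in> Fs" for x
    using bspec[OF bspec[OF Cb that] bH[of x]] by (simp add: bxx)
  have bsq: "1 \<le> (c * nr (b x))^2" if "x \<in> Fs" for x
    using bnr[OF that] by (metis le_less_trans less_le_not_le linorder_le_less_linear one_le_power)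
  have supb: "\<bar>\<Sum>x\<in>G. e x * b x y\<bar> \<le> 1" if "G \<subseteq> Fs" "\<forall>x. \<bar>e x\<bar> \<le> 1" for G e y
  proof (cases "\<exists>x\<in>G. b x y \<noteq> 0")
    case True
    then obtain x where x: "x \<in> G" "b x y \<noteq> 0" by blast
    have finG: "finite G" using Fs that(1) finite_subset by blast
    have "(\<Sum>x\<in>G. e x * b x y) = e x * b x y + (\<Sum>x'\<in>G - {x}. e x' * b x' y)"
      using sum.remove[OF finG x(1)] by simp
    also have "(\<Sum>x'\<in>G - {x}. e x' * b x' y) = 0"
      using bdisj[of x _ y] x that(1) by (intro sum.neutral) auto
    finally have "(\<Sum>x\<in>G. e x * b x y) = e x * b x y" by simp
    moreover have "\<bar>e x * b x y\<bar> \<le> 1"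
      using that(2) b01[of x y] by (simp add: abs_mult mult_le_one)
    ultimately show ?thesis by simp
  next
    case False
    then show ?thesis by simp
  qed
  have ind: "G \<subseteq> Fs \<Longrightarrow> \<exists>e. (\<forall>x. \<bar>e x\<bar> \<le> 1) \<and> real (card G) \<le> (c * nr (\<lambda>y. \<Sum>x\<in>G. e x * b x y))^2"
    if "finite G" for G
    using that
  proof (induction G rule: finite_induct)
    case empty
    show ?case by (intro exI[of _ "\<lambda>_. 0"]) simp
  next
    case (insert a G)
    then obtain e where e: "\<forall>x. \<bar>e x\<bar> \<le> 1" and eG: "real (card G) \<le> (c * nr (\<lambda>y. \<Sum>x\<in>G. e x * b x y))^2"
      by auto
    define s where "s = (\<lambda>y. \<Sum>x\<in>G. e x * b x y)"
    have sH: "s \<in> H" unfolding s_def by (rule sumH[OF insert(1)]) (auto intro: smulH bH)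
    have aF: "a \<in> Fs" using insert by auto
    have par: "(nr (\<lambda>y. s y + b a y))^2 + (nr (\<lambda>y. s y - b a y))^2 = 2 * (nr s)^2 + 2 * (nr (b a))^2"
      by (rule parallelogram[OF sH bH])
    have sum_eq: "(\<lambda>y. \<Sum>x\<in>insert a G. (e(a := t)) x * b x y) = (\<lambda>y. t * b a y + s y)" for t
    proof
      fix y
      have "(\<Sum>x\<in>G. (e(a := t)) x * b x y) = (\<Sum>x\<in>G. e x * b x y)"
        using insert(2) by (intro sum.cong) auto
      then show "(\<Sum>x\<in>insert a G. (e(a := t)) x * b x y) = t * b a y + s y"
        using insert(1,2) by (simp add: s_def)
    qed
    have c2: "c^2 \<ge> 0" by simp
    have cs: "(c * nr f)^2 = c^2 * (nr f)^2" for f by (simp add: power_mult_distrib)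
    show ?case
    proof (cases "(nr (\<lambda>y. s y + b a y))^2 \<ge> (nr s)^2 + (nr (b a))^2")
      case True
      have "real (card (insert a G)) = real (card G) + 1" using insert(1,2) by simp
      also have "\<dots> \<le> c^2 * (nr s)^2 + c^2 * (nr (b a))^2"
        using eG bsq[OF aF] by (simp add: s_def cs)
      also have "\<dots> \<le> c^2 * (nr (\<lambda>y. s y + b a y))^2"
        using mult_left_mono[OF True c2] by (simp add: distrib_left)
      also have "(\<lambda>y. s y + b a y) = (\<lambda>y. \<Sum>x\<in>insert a G. (e(a := 1)) x * b x y)"
        using sum_eq[of 1] by (simp add: add.commute)
      finally show ?thesis using e by (intro exI[of _ "e(a := 1)"]) (simp add: cs)
    next
      case False
      then have F: "(nr (\<lambda>y. s y - b a y))^2 \<ge> (nr s)^2 + (nr (b a))^2" using par by linarith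
      have "real (card (insert a G)) = real (card G) + 1" using insert(1,2) by simp
      also have "\<dots> \<le> c^2 * (nr s)^2 + c^2 * (nr (b a))^2"
        using eG bsq[OF aF] by (simp add: s_def cs)
      also have "\<dots> \<le> c^2 * (nr (\<lambda>y. s y - b a y))^2"
        using mult_left_mono[OF F c2] by (simp add: distrib_left)
      also have "(\<lambda>y. s y - b a y) = (\<lambda>y. \<Sum>x\<in>insert a G. (e(a := -1)) x * b x y)"
        using sum_eq[of "-1"] by simp
      finally show ?thesis using e by (intro exI[of _ "e(a := -1)"]) (simp add: cs)
    qed
  qed
  obtain e where e: "\<forall>x. \<bar>e x\<bar> \<le> 1" and eF: "real (card Fs) \<le> (c * nr (\<lambda>y. \<Sum>x\<in>Fs. e x * b x y))^2"
    using ind[OF Fs] by blast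
  define g where "g = (\<lambda>y. \<Sum>x\<in>Fs. e x * b x y)"
  have gc: "continuous_on UNIV g" unfolding g_def by (intro continuous_intros bcont)
  have gb: "\<forall>y. \<bar>g y\<bar> \<le> 1" unfolding g_def using supb[OF subset_refl e] by blast
  have gM: "nr g \<le> M" using M gc gb by blast
  have g0: "nr g \<ge> 0" using nr_ge0 contH[OF gc] .
  have "(nr g)^2 \<le> M^2" using gM g0 by (intro power_mono) auto
  then have "c^2 * (nr g)^2 \<le> c^2 * M^2" by (intro mult_left_mono) auto
  then show ?thesis using eF by (simp add: g_def power_mult_distrib)
qed

end

theorem theorem1:
  fixes X :: "'a::metric_space itself"
  assumes "compact (UNIV :: 'a set)"
    and "uncountable (UNIV :: 'a set)"
  shows "\<not> (\<exists>(H :: ('a \<Rightarrow> real) set) ip. rkhs H ip \<and>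
              {f :: 'a \<Rightarrow> real. continuous_on UNIV f} \<subseteq> H)"
proof
  assume "\<exists>(H :: ('a \<Rightarrow> real) set) ip. rkhs H ip \<and> {f :: 'a \<Rightarrow> real. continuous_on UNIV f} \<subseteq> H"
  then obtain H :: "('a \<Rightarrow> real) set" and ip where rk: "rkhs H ip"
    and sub: "{f :: 'a \<Rightarrow> real. continuous_on UNIV f} \<subseteq> H" by blast
  have hf: "hilbert_function_space H ip" using rk unfolding rkhs_def by blast
  have ev: "\<And>x. \<exists>C. \<forall>f\<in>H. \<bar>f x\<bar> \<le> C * hfs.nr ip f"
    using rk unfolding rkhs_def hfs.nr_def[OF hfs.intro[OF hf]] by blast
  interpret rk H ip
  proof (rule rk.intro)
    show "hfs H ip" by (rule hfs.intro[OF hf])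
    show "rk_axioms H ip"
      by (rule rk_axioms.intro) (use ev sub in auto)
  qed
  obtain M where M: "\<forall>f. continuous_on UNIV f \<longrightarrow> (\<forall>x. \<bar>f x\<bar> \<le> 1) \<longrightarrow> nr f \<le> M"
    using bounded_incl by blast
  define Cx where "Cx x = (SOME C. \<forall>f\<in>H. \<bar>f x\<bar> \<le> C * nr f)" for x
  have Cx: "\<forall>f\<in>H. \<bar>f x\<bar> \<le> Cx x * nr f" for x unfolding Cx_def by (rule someI_ex[OF evalb])
  define A where "A n = {x. Cx x \<le> real n}" for n :: nat
  have "\<exists>n. infinite (A n)"
  proof (rule ccontr)
    assume "\<not> ?thesis"
    then have fin: "\<And>n. finite (A n)" by blast
    have "UNIV = (\<Union>n. A n)"
    proof -
      have "x \<in> (\<Union>n. A n)" for x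
      proof -
        obtain n where "Cx x \<le> real n" using real_arch_simple by blast
        then show ?thesis unfolding A_def by blast
      qed
      then show ?thesis by blast
    qed
    moreover have "countable (\<Union>n. A n)"
      by (rule countable_UN) (auto intro: countable_finite fin)
    ultimately show False using assms(2) by simp
  qed
  then obtain n where inf: "infinite (A n)" by blast
  define N where "N = nat \<lceil>(real n * M)^2\<rceil> + 1"
  obtain Fs where Fs: "finite Fs" "card Fs = N" "Fs \<subseteq> A n"
    using infinite_arbitrarily_large[OF inf] by blast
  have Cb: "\<forall>x\<in>Fs. \<forall>f\<in>H. \<bar>f x\<bar> \<le> real n * nr f"
  proof (intro ballI)
    fix x f assume x: "x \<in> Fs" and f: "f \<in> H"
    have "Cx x \<le> real n" using x Fs(3) unfolding A_def by blast
    then have "Cx x * nr f \<le> real n * nr f" using nr_ge0[OF f] by (rule mult_right_mono)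
    then show "\<bar>f x\<bar> \<le> real n * nr f" using Cx[of x] f by fastforce
  qed
  have "real (card Fs) \<le> (real n * M)^2" by (rule key[OF M Fs(1) Cb])
  moreover have "real N > (real n * M)^2"
  proof -
    have "(real n * M)^2 \<le> real (nat \<lceil>(real n * M)^2\<rceil>)" by (rule real_nat_ceiling_ge)
    moreover have "real N = real (nat \<lceil>(real n * M)^2\<rceil>) + 1" by (simp only: N_def of_nat_add of_nat_1)
    ultimately show ?thesis by linarith
  qed
  ultimately show False using Fs(2) by simp
qed

end
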